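(* Let $(H,v)$ be a rooted graph. Then for any integers $k\ge 0$ and $g\ge 2$, \[ X_{P^k(C_g,\,H)}=(g-1)X_{H^{k+g-1}}-\sum_{l=1}^{g-2}X_{C_{g-l}}\,X_{H^{k+l-1}}. \]
   Context: All graphs are finite simple graphs. The chromatic symmetric function of a graph $G$ is $X_G=\sum_{\kappa}\prod_{v\in V(G)}x_{\kappa(v)}$, where $\kappa$ ranges over proper colorings $\kappa:V(G)\to\{1,2,\dots\}$. $C_g$ is the cycle on $g$ vertices for $g\ge 3$, and $C_2:=K_2$; cycles are rooted at any vertex. For rooted graphs $(G,u)$, $(H,v)$ and $k\ge 0$, $P^k(G,H)$ is obtained from the disjoint union of $G$ and $H$ by adding a path of length $k$ (with $k-1$ new internal vertices) joining $u$ and $v$ (for $k=0$, $u$ and $v$ are identified). The tailed graph $H^k$ is $P^k(H,K_1)$, i.e., $H$ with a pendant path of length $k$ attached at its root. *)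

theory Defs
  imports Complex_Main "HOL-Library.FuncSet"
begin

type_synonym 'a graph = "'a set \<times> 'a set set"

definition verts :: "'a graph \<Rightarrow> 'a set" where "verts G = fst G"
definition edges :: "'a graph \<Rightarrow> 'a set set" where "edges G = snd G"

definition simple_graph :: "'a graph \<Rightarrow> bool" where
  "simple_graph G \<longleftrightarrow> finite (verts G) \<and>
     (\<forall>e\<in>edges G. \<exists>a b. a \<noteq> b \<and> a \<in> verts G \<and> b \<in> verts G \<and> e = {a, b})"

definition proper_colorings :: "'a graph \<Rightarrow> nat \<Rightarrow> ('a \<Rightarrow> nat) set" where
  "proper_colorings G n =
     {\<kappa> \<in> verts G \<rightarrow>\<^sub>E {..<n}. \<forall>a b. {a, b} \<in> edges G \<longrightarrow> a \<noteq> b \<longrightarrow> \<kappa> a \<noteq> \<kappa> b}"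

text \<open>The chromatic symmetric function X_G, specialised to the first n variables
  x 0, ..., x (n-1) (all other variables set to 0). Two symmetric functions are equal
  iff all these specialisations agree for all n and all real arguments.\<close>
definition CSF :: "'a graph \<Rightarrow> nat \<Rightarrow> (nat \<Rightarrow> real) \<Rightarrow> real" where
  "CSF G n x = (\<Sum>\<kappa>\<in>proper_colorings G n. \<Prod>v\<in>verts G. x (\<kappa> v))"

text \<open>Cycle C_g on vertices 0..g-1 (rooted at 0); for g = 2 this is K_2.\<close>
definition cycle_graph :: "nat \<Rightarrow> nat graph" where
  "cycle_graph g = ({..<g}, {{i, (i + 1) mod g} | i. i < g})"

definition K1 :: "nat graph" where "K1 = ({0}, {})"

text \<open>P^k(G,H) for rooted graphs (G,u), (H,w): disjoint union plus a path of length k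
  from u to w (for k = 0, u and w are identified).  Vertices of G are Inl (Inl a)
  (except u when k = 0, which becomes Inl (Inr w)), vertices of H are Inl (Inr b),
  and the internal path vertices are Inr 1, ..., Inr (k-1).\<close>
definition Pk_vG :: "nat \<Rightarrow> 'a \<Rightarrow> 'b \<Rightarrow> 'a \<Rightarrow> ('a + 'b) + nat" where
  "Pk_vG k u w a = (if k = 0 \<and> a = u then Inl (Inr w) else Inl (Inl a))"

definition Pk_path :: "nat \<Rightarrow> 'a \<Rightarrow> 'b \<Rightarrow> nat \<Rightarrow> ('a + 'b) + nat" where
  "Pk_path k u w i = (if i = 0 then Pk_vG k u w u else if i < k then Inr i else Inl (Inr w))"

definition Pk :: "nat \<Rightarrow> 'a graph \<Rightarrow> 'a \<Rightarrow> 'b graph \<Rightarrow> 'b \<Rightarrow> (('a + 'b) + nat) graph" where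
  "Pk k G u H w =
    (Pk_vG k u w ` verts G \<union> (\<lambda>b. Inl (Inr b)) ` verts H \<union> Inr ` {1..<k},
     {{Pk_vG k u w a, Pk_vG k u w a'} | a a'. {a, a'} \<in> edges G} \<union>
     {{Inl (Inr b), Inl (Inr b')} | b b'. {b, b'} \<in> edges H} \<union>
     {{Pk_path k u w i, Pk_path k u w (i + 1)} | i. i < k})"

definition tailed :: "'b graph \<Rightarrow> 'b \<Rightarrow> nat \<Rightarrow> (('b + nat) + nat) graph" where
  "tailed H w k = Pk k H w K1 0"

end

theory Submission
  imports Defs
begin


lemma verts_pair[simp]: "verts (V, E) = V" by (simp add: verts_def)
lemma edges_pair[simp]: "edges (V, E) = E" by (simp add: edges_def)

definition CSw :: "'v graph \<Rightarrow> nat \<Rightarrow> ('v \<Rightarrow> nat \<Rightarrow> real) \<Rightarrow> real" where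
  "CSw G n f = (\<Sum>\<kappa>\<in>proper_colorings G n. \<Prod>a\<in>verts G. f a (\<kappa> a))"

lemma CSF_CSw: "CSF G n x = CSw G n (\<lambda>_. x)"
  by (simp add: CSF_def CSw_def)

lemma finite_pc: "finite (verts G) \<Longrightarrow> finite (proper_colorings G n)"
  unfolding proper_colorings_def
  by (rule finite_subset[of _ "verts G \<rightarrow>\<^sub>E {..<n}"]) (auto intro: finite_PiE)

lemma CSw_relabel:
  assumes inj: "inj_on h V" and fin: "finite V"
    and E: "\<forall>e\<in>E. \<exists>a b. a \<in> V \<and> b \<in> V \<and> e = {a, b}"
  shows "CSw (h ` V, (\<lambda>e. h ` e) ` E) n f = CSw (V, E) n (\<lambda>a. f (h a))"
proof -
  let ?S = "proper_colorings (h ` V, (\<lambda>e. h ` e) ` E) n"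
  let ?T = "proper_colorings (V, E) n"
  let ?j = "\<lambda>\<kappa>' a. if a \<in> V then \<kappa>' (h a) else undefined"
  let ?i = "\<lambda>\<kappa> b. if b \<in> h ` V then \<kappa> (inv_into V h b) else undefined"
  have "CSw (h ` V, (\<lambda>e. h ` e) ` E) n f = (\<Sum>\<kappa>'\<in>?S. \<Prod>a\<in>V. f (h a) (\<kappa>' (h a)))"
    unfolding CSw_def by (simp add: prod.reindex[OF inj])
  also have "\<dots> = (\<Sum>\<kappa>\<in>?T. \<Prod>a\<in>V. f (h a) (\<kappa> a))"
  proof (rule sum.reindex_bij_witness[where i = ?i and j = ?j])
    fix \<kappa>' assume "\<kappa>' \<in> ?S"
    then have ext: "\<kappa>' \<in> extensional (h ` V)" by (simp add: proper_colorings_def PiE_def)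
    show "?i (?j \<kappa>') = \<kappa>'"
    proof
      fix b show "?i (?j \<kappa>') b = \<kappa>' b"
        using ext by (auto simp: inv_into_f_f[OF inj] extensional_def)
    qed
  next
    fix \<kappa>' assume a: "\<kappa>' \<in> ?S"
    show "?j \<kappa>' \<in> ?T"
      unfolding proper_colorings_def
    proof (intro CollectI conjI allI impI)
      show "?j \<kappa>' \<in> verts (V, E) \<rightarrow>\<^sub>E {..<n}"
      proof -
        have "\<forall>b\<in>V. ?j \<kappa>' b \<in> {..<n}"
          using a by (auto simp: proper_colorings_def PiE_iff)
        moreover have "?j \<kappa>' \<in> extensional V" by (simp add: extensional_def)
        ultimately show ?thesis by (simp add: PiE_iff)
      qed
    next
      fix x y assume xy: "{x, y} \<in> edges (V, E)" "x \<noteq> y"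
      then obtain p q where pq: "p \<in> V" "q \<in> V" "{x, y} = {p, q}" using E by force
      then have xV: "x \<in> V" "y \<in> V" by (auto simp: doubleton_eq_iff)
      have "h ` {x, y} \<in> (\<lambda>e. h ` e) ` E" using xy(1) by (intro imageI) simp
      then have "{h x, h y} \<in> edges (h ` V, (\<lambda>e. h ` e) ` E)" by simp
      moreover have "h x \<noteq> h y" using xy xV inj by (auto dest: inj_onD)
      ultimately have "\<kappa>' (h x) \<noteq> \<kappa>' (h y)" using a unfolding proper_colorings_def by blast
      then show "?j \<kappa>' x \<noteq> ?j \<kappa>' y" using xV by simp
    qed
  next
    fix \<kappa> assume "\<kappa> \<in> ?T"
    then have ext: "\<kappa> \<in> extensional V" by (simp add: proper_colorings_def PiE_def)
    show "?j (?i \<kappa>) = \<kappa>"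
    proof
      fix a show "?j (?i \<kappa>) a = \<kappa> a"
        using ext by (auto simp: inv_into_f_f[OF inj] extensional_def)
    qed
  next
    fix \<kappa> assume a: "\<kappa> \<in> ?T"
    show "?i \<kappa> \<in> ?S"
      unfolding proper_colorings_def
    proof (intro CollectI conjI allI impI)
      show "?i \<kappa> \<in> verts (h ` V, (\<lambda>e. h ` e) ` E) \<rightarrow>\<^sub>E {..<n}"
      proof -
        have "\<forall>b\<in>h ` V. ?i \<kappa> b \<in> {..<n}"
          using a by (auto simp: proper_colorings_def PiE_iff inv_into_f_f[OF inj])
        moreover have "?i \<kappa> \<in> extensional (h ` V)" by (simp add: extensional_def)
        ultimately show ?thesis by (simp add: PiE_iff)
      qed
    next
      fix x y assume xy: "{x, y} \<in> edges (h ` V, (\<lambda>e. h ` e) ` E)" "x \<noteq> y"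
      then obtain e where e: "e \<in> E" "{x, y} = h ` e" by auto
      then obtain p q where pq: "p \<in> V" "q \<in> V" "e = {p, q}" using E by force
      then have hpq: "{x, y} = {h p, h q}" using e by auto
      then have pq': "p \<noteq> q" using xy by auto
      have "\<kappa> p \<noteq> \<kappa> q" using a e pq pq' unfolding proper_colorings_def by auto
      from hpq have "(x = h p \<and> y = h q) \<or> (x = h q \<and> y = h p)" by (auto simp: doubleton_eq_iff)
      then show "?i \<kappa> x \<noteq> ?i \<kappa> y" using pq \<open>\<kappa> p \<noteq> \<kappa> q\<close>
        by (elim disjE) (simp_all add: inv_into_f_f[OF inj])
    qed
  next
    fix \<kappa>' assume "\<kappa>' \<in> ?S"
    show "(\<Prod>a\<in>V. f (h a) (?j \<kappa>' a)) = (\<Prod>a\<in>V. f (h a) (\<kappa>' (h a)))"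
      by (rule prod.cong) auto
  qed
  also have "\<dots> = CSw (V, E) n (\<lambda>a. f (h a))" unfolding CSw_def by simp
  finally show ?thesis .
qed

lemma CSw_cut_pairs:
  assumes fin1: "finite V1" and fin2: "finite V2" and int: "V1 \<inter> V2 = {z}"
    and E1: "\<forall>e\<in>E1. e \<subseteq> V1" and E2: "\<forall>e\<in>E2. e \<subseteq> V2"
  shows "CSw (V1 \<union> V2, E1 \<union> E2) n f =
    (\<Sum>p\<in>{p \<in> proper_colorings (V1, E1) n \<times> proper_colorings (V2, E2) n. fst p z = snd p z}.
        (\<Prod>a\<in>V1. f a (fst p a)) * (\<Prod>a\<in>V2 - {z}. f a (snd p a)))"
proof -
  let ?S = "proper_colorings (V1 \<union> V2, E1 \<union> E2) n"
  let ?T = "{p \<in> proper_colorings (V1, E1) n \<times> proper_colorings (V2, E2) n. fst p z = snd p z}"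
  let ?j = "\<lambda>\<kappa>. (restrict \<kappa> V1, restrict \<kappa> V2)"
  let ?i = "\<lambda>p a. if a \<in> V1 then fst p a else snd p a"
  have zV: "z \<in> V1" "z \<in> V2" using int by auto
  have split: "\<And>\<kappa>. (\<Prod>a\<in>V1 \<union> V2. f a (\<kappa> a)) = (\<Prod>a\<in>V1. f a (\<kappa> a)) * (\<Prod>a\<in>V2 - {z}. f a (\<kappa> a))"
  proof -
    fix \<kappa>
    have "V1 \<union> V2 = V1 \<union> (V2 - {z})" using zV by auto
    moreover have "V1 \<inter> (V2 - {z}) = {}" using int by auto
    ultimately show "(\<Prod>a\<in>V1 \<union> V2. f a (\<kappa> a)) = (\<Prod>a\<in>V1. f a (\<kappa> a)) * (\<Prod>a\<in>V2 - {z}. f a (\<kappa> a))"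
      using fin1 fin2 by (simp add: prod.union_disjoint)
  qed
  have "CSw (V1 \<union> V2, E1 \<union> E2) n f = (\<Sum>\<kappa>\<in>?S. (\<Prod>a\<in>V1. f a (\<kappa> a)) * (\<Prod>a\<in>V2 - {z}. f a (\<kappa> a)))"
    unfolding CSw_def by (simp add: split)
  also have "\<dots> = (\<Sum>p\<in>?T. (\<Prod>a\<in>V1. f a (fst p a)) * (\<Prod>a\<in>V2 - {z}. f a (snd p a)))"
  proof (rule sum.reindex_bij_witness[where i = ?i and j = ?j])
    fix \<kappa> assume "\<kappa> \<in> ?S"
    then have ext: "\<kappa> \<in> extensional (V1 \<union> V2)" by (simp add: proper_colorings_def PiE_def)
    show "?i (?j \<kappa>) = \<kappa>"
    proof
      fix a show "?i (?j \<kappa>) a = \<kappa> a" using ext by (auto simp: extensional_def)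
    qed
  next
    fix \<kappa> assume a: "\<kappa> \<in> ?S"
    have c1: "restrict \<kappa> V1 \<in> proper_colorings (V1, E1) n"
      unfolding proper_colorings_def
    proof (intro CollectI conjI allI impI)
      show "restrict \<kappa> V1 \<in> verts (V1, E1) \<rightarrow>\<^sub>E {..<n}"
        using a by (auto simp: proper_colorings_def PiE_iff)
    next
      fix x y assume xy: "{x, y} \<in> edges (V1, E1)" "x \<noteq> y"
      then have "x \<in> V1" "y \<in> V1" using E1 by auto
      moreover have "\<kappa> x \<noteq> \<kappa> y" using a xy unfolding proper_colorings_def by auto
      ultimately show "restrict \<kappa> V1 x \<noteq> restrict \<kappa> V1 y" by simp
    qed
    have c2: "restrict \<kappa> V2 \<in> proper_colorings (V2, E2) n"
      unfolding proper_colorings_def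
    proof (intro CollectI conjI allI impI)
      show "restrict \<kappa> V2 \<in> verts (V2, E2) \<rightarrow>\<^sub>E {..<n}"
        using a by (auto simp: proper_colorings_def PiE_iff)
    next
      fix x y assume xy: "{x, y} \<in> edges (V2, E2)" "x \<noteq> y"
      then have "x \<in> V2" "y \<in> V2" using E2 by auto
      moreover have "\<kappa> x \<noteq> \<kappa> y" using a xy unfolding proper_colorings_def by auto
      ultimately show "restrict \<kappa> V2 x \<noteq> restrict \<kappa> V2 y" by simp
    qed
    show "?j \<kappa> \<in> ?T" using c1 c2 zV by simp
  next
    fix p assume "p \<in> ?T"
    then have p1: "fst p \<in> proper_colorings (V1, E1) n" and p2: "snd p \<in> proper_colorings (V2, E2) n"
      and pz: "fst p z = snd p z" by auto
    have e1: "fst p \<in> extensional V1" using p1 by (simp add: proper_colorings_def PiE_def)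
    have e2: "snd p \<in> extensional V2" using p2 by (simp add: proper_colorings_def PiE_def)
    show "?j (?i p) = p"
    proof (rule prod_eqI)
      show "fst (?j (?i p)) = fst p"
      proof
        fix a show "fst (?j (?i p)) a = fst p a" using e1 by (auto simp: extensional_def)
      qed
      show "snd (?j (?i p)) = snd p"
      proof
        fix a show "snd (?j (?i p)) a = snd p a" using e2 pz int by (auto simp: extensional_def)
      qed
    qed
  next
    fix p assume "p \<in> ?T"
    then have p1: "fst p \<in> proper_colorings (V1, E1) n" and p2: "snd p \<in> proper_colorings (V2, E2) n"
      and pz: "fst p z = snd p z" by auto
    have e2: "snd p \<in> extensional V2" using p2 by (simp add: proper_colorings_def PiE_def)
    show "?i p \<in> ?S"
      unfolding proper_colorings_def
    proof (intro CollectI conjI allI impI)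
      have "\<forall>a\<in>V1 \<union> V2. ?i p a \<in> {..<n}"
        using p1 p2 by (auto simp: proper_colorings_def PiE_iff)
      moreover have "?i p \<in> extensional (V1 \<union> V2)" using e2 by (auto simp: extensional_def)
      ultimately show "?i p \<in> verts (V1 \<union> V2, E1 \<union> E2) \<rightarrow>\<^sub>E {..<n}" by (simp add: PiE_iff)
    next
      fix x y assume xy: "{x, y} \<in> edges (V1 \<union> V2, E1 \<union> E2)" "x \<noteq> y"
      then consider "{x, y} \<in> E1" | "{x, y} \<in> E2" by auto
      then show "?i p x \<noteq> ?i p y"
      proof cases
        case 1
        then have "x \<in> V1" "y \<in> V1" using E1 by auto
        moreover have "fst p x \<noteq> fst p y" using p1 1 xy(2) unfolding proper_colorings_def by auto
        ultimately show ?thesis by simp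
      next
        case 2
        then have xy2: "x \<in> V2" "y \<in> V2" using E2 by auto
        have "snd p x \<noteq> snd p y" using p2 2 xy(2) unfolding proper_colorings_def by auto
        moreover have "?i p x = snd p x" "?i p y = snd p y" using xy2 int pz by auto
        ultimately show ?thesis by simp
      qed
    qed
  next
    fix \<kappa> assume "\<kappa> \<in> ?S"
    show "(\<Prod>a\<in>V1. f a (fst (?j \<kappa>) a)) * (\<Prod>a\<in>V2 - {z}. f a (snd (?j \<kappa>) a)) =
          (\<Prod>a\<in>V1. f a (\<kappa> a)) * (\<Prod>a\<in>V2 - {z}. f a (\<kappa> a))"
      by simp
  qed
  finally show ?thesis .
qed

lemma prod_upd_delta:
  fixes f :: "'v \<Rightarrow> nat \<Rightarrow> real"
  assumes "finite V" "z \<in> V"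
  shows "(\<Prod>a\<in>V. (f(z := \<lambda>c'. if c' = c then g c' else 0)) a (\<kappa> a)) =
         (if \<kappa> z = c then g c * (\<Prod>a\<in>V - {z}. f a (\<kappa> a)) else 0)"
proof -
  have "(\<Prod>a\<in>V. (f(z := \<lambda>c'. if c' = c then g c' else 0)) a (\<kappa> a)) =
        (if \<kappa> z = c then g (\<kappa> z) else 0) * (\<Prod>a\<in>V - {z}. (f(z := \<lambda>c'. if c' = c then g c' else 0)) a (\<kappa> a))"
    using assms by (simp add: prod.remove)
  also have "(\<Prod>a\<in>V - {z}. (f(z := \<lambda>c'. if c' = c then g c' else 0)) a (\<kappa> a)) = (\<Prod>a\<in>V - {z}. f a (\<kappa> a))"
    by (rule prod.cong) auto
  also have "(if \<kappa> z = c then g (\<kappa> z) else 0) * (\<Prod>a\<in>V - {z}. f a (\<kappa> a)) =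
     (if \<kappa> z = c then g c * (\<Prod>a\<in>V - {z}. f a (\<kappa> a)) else 0)" by simp
  finally show ?thesis .
qed

lemma CSw_cut:
  assumes fin1: "finite V1" and fin2: "finite V2" and int: "V1 \<inter> V2 = {z}"
    and E1: "\<forall>e\<in>E1. e \<subseteq> V1" and E2: "\<forall>e\<in>E2. e \<subseteq> V2"
  shows "CSw (V1 \<union> V2, E1 \<union> E2) n f =
    (\<Sum>c<n. CSw (V1, E1) n (f(z := \<lambda>c'. if c' = c then f z c' else 0)) *
            CSw (V2, E2) n (f(z := \<lambda>c'. if c' = c then 1 else 0)))"
proof -
  let ?P1 = "proper_colorings (V1, E1) n" and ?P2 = "proper_colorings (V2, E2) n"
  have zV: "z \<in> V1" "z \<in> V2" using int by auto
  have f1: "finite ?P1" "finite ?P2" using fin1 fin2 by (auto intro: finite_pc)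
  let ?F = "\<lambda>p. (\<Prod>a\<in>V1. f a (fst p a)) * (\<Prod>a\<in>V2 - {z}. f a (snd p a))"
  have rng: "\<And>\<kappa>. \<kappa> \<in> ?P1 \<Longrightarrow> \<kappa> z < n" using zV by (auto simp: proper_colorings_def PiE_iff)
  have "(\<Sum>c<n. CSw (V1, E1) n (f(z := \<lambda>c'. if c' = c then f z c' else 0)) *
            CSw (V2, E2) n (f(z := \<lambda>c'. if c' = c then 1 else 0))) =
        (\<Sum>c<n. (\<Sum>\<kappa>1\<in>?P1. if \<kappa>1 z = c then (\<Prod>a\<in>V1. f a (\<kappa>1 a)) else 0) *
                (\<Sum>\<kappa>2\<in>?P2. if \<kappa>2 z = c then (\<Prod>a\<in>V2 - {z}. f a (\<kappa>2 a)) else 0))"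
  proof (rule sum.cong[OF refl])
    fix c
    have "\<And>\<kappa>. (if \<kappa> z = c then f z c * (\<Prod>a\<in>V1 - {z}. f a (\<kappa> a)) else 0) =
               (if \<kappa> z = c then (\<Prod>a\<in>V1. f a (\<kappa> a)) else 0)"
      using fin1 zV by (auto simp: prod.remove)
    then show "CSw (V1, E1) n (f(z := \<lambda>c'. if c' = c then f z c' else 0)) *
            CSw (V2, E2) n (f(z := \<lambda>c'. if c' = c then 1 else 0)) =
          (\<Sum>\<kappa>1\<in>?P1. if \<kappa>1 z = c then (\<Prod>a\<in>V1. f a (\<kappa>1 a)) else 0) *
                (\<Sum>\<kappa>2\<in>?P2. if \<kappa>2 z = c then (\<Prod>a\<in>V2 - {z}. f a (\<kappa>2 a)) else 0)"
      unfolding CSw_def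
      by (simp only: prod_upd_delta[OF fin1 zV(1), where g = "\<lambda>c'. f z c'"]
          prod_upd_delta[OF fin2 zV(2), where g = "\<lambda>c'. 1"] mult_1 verts_pair)
  qed
  also have "\<dots> = (\<Sum>c<n. \<Sum>\<kappa>1\<in>?P1. \<Sum>\<kappa>2\<in>?P2. if \<kappa>1 z = c \<and> \<kappa>2 z = c then ?F (\<kappa>1, \<kappa>2) else 0)"
    by (simp only: sum_product) (intro sum.cong refl, simp)
  also have "\<dots> = (\<Sum>\<kappa>1\<in>?P1. \<Sum>\<kappa>2\<in>?P2. \<Sum>c<n. if \<kappa>1 z = c \<and> \<kappa>2 z = c then ?F (\<kappa>1, \<kappa>2) else 0)"
    by (subst sum.swap) (rule sum.cong[OF refl], rule sum.swap)
  also have "\<dots> = (\<Sum>\<kappa>1\<in>?P1. \<Sum>\<kappa>2\<in>?P2. if \<kappa>1 z = \<kappa>2 z then ?F (\<kappa>1, \<kappa>2) else 0)"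
  proof (intro sum.cong refl)
    fix \<kappa>1 \<kappa>2 assume "\<kappa>1 \<in> ?P1"
    then have r: "\<kappa>1 z < n" by (rule rng)
    have "(\<Sum>c<n. if \<kappa>1 z = c \<and> \<kappa>2 z = c then ?F (\<kappa>1, \<kappa>2) else 0) =
          (\<Sum>c<n. if \<kappa>1 z = c then (if \<kappa>1 z = \<kappa>2 z then ?F (\<kappa>1, \<kappa>2) else 0) else 0)"
      by (rule sum.cong) auto
    then show "(\<Sum>c<n. if \<kappa>1 z = c \<and> \<kappa>2 z = c then ?F (\<kappa>1, \<kappa>2) else 0) =
               (if \<kappa>1 z = \<kappa>2 z then ?F (\<kappa>1, \<kappa>2) else 0)"
      using r by simp
  qed
  also have "\<dots> = (\<Sum>p\<in>?P1 \<times> ?P2. if fst p z = snd p z then ?F p else 0)"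
    by (simp add: sum.cartesian_product) (rule sum.cong, auto)
  also have "\<dots> = (\<Sum>p\<in>{p \<in> ?P1 \<times> ?P2. fst p z = snd p z}. ?F p)"
    using f1 by (simp add: sum.inter_filter)
  also have "\<dots> = CSw (V1 \<union> V2, E1 \<union> E2) n f"
    using CSw_cut_pairs[OF assms] by simp
  finally show ?thesis by simp
qed

lemma CSw_partition:
  assumes "finite (verts G)" "u \<in> verts G"
  shows "CSw G n f = (\<Sum>c<n. CSw G n (f(u := \<lambda>c'. if c' = c then f u c' else 0)))"
proof -
  have rng: "\<And>\<kappa>. \<kappa> \<in> proper_colorings G n \<Longrightarrow> \<kappa> u < n"
    using assms by (auto simp: proper_colorings_def PiE_iff)
  have "(\<Sum>c<n. CSw G n (f(u := \<lambda>c'. if c' = c then f u c' else 0))) =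
        (\<Sum>c<n. \<Sum>\<kappa>\<in>proper_colorings G n. if \<kappa> u = c then f u c * (\<Prod>a\<in>verts G - {u}. f a (\<kappa> a)) else 0)"
    unfolding CSw_def by (simp only: prod_upd_delta[OF assms, where g = "\<lambda>c'. f u c'"])
  also have "\<dots> = (\<Sum>\<kappa>\<in>proper_colorings G n. \<Sum>c<n. if \<kappa> u = c then f u c * (\<Prod>a\<in>verts G - {u}. f a (\<kappa> a)) else 0)"
    by (rule sum.swap)
  also have "\<dots> = (\<Sum>\<kappa>\<in>proper_colorings G n. f u (\<kappa> u) * (\<Prod>a\<in>verts G - {u}. f a (\<kappa> a)))"
    by (rule sum.cong[OF refl]) (auto simp: rng)
  also have "\<dots> = CSw G n f"
    unfolding CSw_def using assms by (simp add: prod.remove)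
  finally show ?thesis by simp
qed

definition RS :: "'v graph \<Rightarrow> 'v \<Rightarrow> nat \<Rightarrow> (nat \<Rightarrow> real) \<Rightarrow> nat \<Rightarrow> real" where
  "RS G u n x d = CSw G n ((\<lambda>_. x)(u := \<lambda>c'. if c' = d then 1 else 0))"

lemma CSw_root_g:
  assumes "finite (verts G)" "u \<in> verts G"
  shows "CSw G n ((\<lambda>_. x)(u := \<lambda>c'. if c' = c then g c' else 0)) = g c * RS G u n x c"
  unfolding RS_def CSw_def
  by (simp only: prod_upd_delta[OF assms, where g = g] prod_upd_delta[OF assms, where g = "\<lambda>_. 1"])
     (simp add: sum_distrib_left if_distrib cong: if_cong)

lemma CSF_root:
  assumes "finite (verts G)" "u \<in> verts G"
  shows "CSF G n x = (\<Sum>c<n. x c * RS G u n x c)"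
  unfolding CSF_CSw using CSw_partition[OF assms, of n "\<lambda>_. x"] CSw_root_g[OF assms] by simp



definition walks :: "nat \<Rightarrow> nat \<Rightarrow> (nat \<Rightarrow> nat) set" where
  "walks n k = {p \<in> {..k} \<rightarrow>\<^sub>E {..<n}. \<forall>i<k. p i \<noteq> p (Suc i)}"

definition Wk :: "nat \<Rightarrow> (nat \<Rightarrow> real) \<Rightarrow> nat \<Rightarrow> nat \<Rightarrow> nat \<Rightarrow> real" where
  "Wk n x k c d = (\<Sum>p\<in>{p \<in> walks n k. p 0 = c \<and> p k = d}. \<Prod>i\<in>{1..k}. x (p i))"

definition Pw :: "nat \<Rightarrow> (nat \<Rightarrow> real) \<Rightarrow> nat \<Rightarrow> nat \<Rightarrow> real" where
  "Pw n x k c = (\<Sum>d<n. Wk n x k c d)"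

lemma finite_walks[simp]: "finite (walks n k)"
  unfolding walks_def by (rule finite_subset[of _ "{..k} \<rightarrow>\<^sub>E {..<n}"]) (auto intro: finite_PiE)

lemma walks_range: "p \<in> walks n k \<Longrightarrow> i \<le> k \<Longrightarrow> p i < n"
  unfolding walks_def by (auto simp: PiE_iff)

lemma Wk_out: "d \<ge> n \<or> c \<ge> n \<Longrightarrow> Wk n x k c d = 0"
proof -
  assume a: "d \<ge> n \<or> c \<ge> n"
  have "{p \<in> walks n k. p 0 = c \<and> p k = d} = {}"
    using a walks_range[of _ n k 0] walks_range[of _ n k k] by fastforce
  then show ?thesis unfolding Wk_def by (simp only: sum.empty)
qed

lemma Pw_walks: "Pw n x k c = (\<Sum>p\<in>{p \<in> walks n k. p 0 = c}. \<Prod>i\<in>{1..k}. x (p i))"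
proof -
  have "(\<Sum>p\<in>{p \<in> walks n k. p 0 = c}. \<Prod>i\<in>{1..k}. x (p i)) =
        (\<Sum>d<n. \<Sum>p\<in>{p \<in> {p \<in> walks n k. p 0 = c}. p k = d}. \<Prod>i\<in>{1..k}. x (p i))"
    by (rule sum.group[symmetric]) (auto simp: walks_range)
  also have "\<dots> = Pw n x k c"
    unfolding Pw_def Wk_def by (rule sum.cong[OF refl], rule sum.cong) auto
  finally show ?thesis by simp
qed

lemma walks0: "walks n 0 = {..0} \<rightarrow>\<^sub>E {..<n}" by (simp add: walks_def)

lemma Wk0: "Wk n x 0 c d = (if c = d \<and> d < n then 1 else 0)"
proof (cases "c = d \<and> d < n")
  case True
  have "{p \<in> walks n 0. p 0 = c \<and> p 0 = d} = {\<lambda>i. if i = 0 then d else undefined}"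
  proof (rule set_eqI, rule iffI)
    fix p assume "p \<in> {p \<in> walks n 0. p 0 = c \<and> p 0 = d}"
    then have "p \<in> {..0} \<rightarrow>\<^sub>E {..<n}" "p 0 = d" by (auto simp: walks0)
    then have "p = (\<lambda>i. if i = 0 then d else undefined)"
      by (intro ext) (auto simp: PiE_iff extensional_def)
    then show "p \<in> {\<lambda>i. if i = 0 then d else undefined}" by simp
  next
    fix p :: "nat \<Rightarrow> nat" assume "p \<in> {\<lambda>i. if i = 0 then d else undefined}"
    then show "p \<in> {p \<in> walks n 0. p 0 = c \<and> p 0 = d}"
      using True by (auto simp: walks0 PiE_iff extensional_def)
  qed
  then show ?thesis using True unfolding Wk_def by simp
next
  case False
  then have "{p \<in> walks n 0. p 0 = c \<and> p 0 = d} = {}"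
    by (auto simp: walks0 PiE_iff)
  then show ?thesis using False unfolding Wk_def by (simp only: sum.empty if_False)
qed

lemma Pw0: "c < n \<Longrightarrow> Pw n x 0 c = 1"
  unfolding Pw_def Wk0 by simp

lemma Wk_last:
  assumes d: "d < n"
  shows "Wk n x (Suc k) c d = (Pw n x k c - Wk n x k c d) * x d"
proof -
  let ?S = "{p \<in> walks n (Suc k). p 0 = c \<and> p (Suc k) = d}"
  let ?T = "{p \<in> walks n k. p 0 = c \<and> p k \<noteq> d}"
  have "Wk n x (Suc k) c d = (\<Sum>p\<in>?S. (\<Prod>i\<in>{1..k}. x (p i)) * x d)"
    unfolding Wk_def by (rule sum.cong[OF refl]) auto
  also have "\<dots> = (\<Sum>p\<in>?T. (\<Prod>i\<in>{1..k}. x (p i)) * x d)"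
  proof (rule sum.reindex_bij_witness[where i = "\<lambda>q. q(Suc k := d)" and j = "\<lambda>p. restrict p {..k}"])
    fix p assume "p \<in> ?S"
    then show "(restrict p {..k})(Suc k := d) = p"
      by (auto simp: walks_def PiE_iff extensional_def fun_eq_iff)
  next
    fix p assume "p \<in> ?S"
    then show "restrict p {..k} \<in> ?T"
      by (auto simp: walks_def PiE_iff)
  next
    fix q assume "q \<in> ?T"
    then show "restrict (q(Suc k := d)) {..k} = q"
      by (auto simp: walks_def PiE_iff extensional_def fun_eq_iff)
  next
    fix q assume q: "q \<in> ?T"
    show "q(Suc k := d) \<in> ?S"
      unfolding walks_def
    proof (intro CollectI conjI allI impI)
      show "q(Suc k := d) \<in> {..Suc k} \<rightarrow>\<^sub>E {..<n}"
        using q d by (auto simp: walks_def PiE_iff extensional_def)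
    next
      fix i assume "i < Suc k"
      then show "(q(Suc k := d)) i \<noteq> (q(Suc k := d)) (Suc i)"
        using q by (cases "i = k") (auto simp: walks_def)
    next
      show "(q(Suc k := d)) 0 = c" using q by simp
    next
      show "(q(Suc k := d)) (Suc k) = d" by simp
    qed
  next
    fix p assume "p \<in> ?S"
    show "(\<Prod>i\<in>{1..k}. x (restrict p {..k} i)) * x d = (\<Prod>i\<in>{1..k}. x (p i)) * x d"
      by (rule arg_cong[where f = "\<lambda>t. t * x d"], rule prod.cong) auto
  qed
  also have "\<dots> = (\<Sum>p\<in>?T. \<Prod>i\<in>{1..k}. x (p i)) * x d"
    by (simp add: sum_distrib_right)
  also have "(\<Sum>p\<in>?T. \<Prod>i\<in>{1..k}. x (p i)) = Pw n x k c - Wk n x k c d"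
  proof -
    have "{p \<in> walks n k. p 0 = c} = ?T \<union> {p \<in> walks n k. p 0 = c \<and> p k = d}" by auto
    moreover have "?T \<inter> {p \<in> walks n k. p 0 = c \<and> p k = d} = {}" by auto
    ultimately have "Pw n x k c = (\<Sum>p\<in>?T. \<Prod>i\<in>{1..k}. x (p i)) + Wk n x k c d"
      unfolding Pw_walks Wk_def by (simp add: sum.union_disjoint)
    then show ?thesis by simp
  qed
  finally show ?thesis .
qed



lemma Wk_assoc: "Wk n x (a + b) c d = (\<Sum>e<n. Wk n x a c e * Wk n x b e d)"
proof (induction b arbitrary: d)
  case 0
  show ?case
  proof (cases "d < n")
    case True
    have "(\<Sum>e<n. Wk n x a c e * Wk n x 0 e d) = (\<Sum>e<n. if e = d then Wk n x a c e else 0)"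
      by (rule sum.cong) (auto simp: Wk0)
    then show ?thesis using True by simp
  next
    case False
    then show ?thesis by (simp add: Wk0 Wk_out)
  qed
next
  case (Suc b)
  show ?case
  proof (cases "d < n")
    case True
    have P: "Pw n x (a + b) c = (\<Sum>e<n. Wk n x a c e * Pw n x b e)"
      unfolding Pw_def Suc.IH by (simp add: sum_distrib_left) (rule sum.swap)
    have "Wk n x (a + Suc b) c d = (Pw n x (a + b) c - Wk n x (a + b) c d) * x d"
      using Wk_last[OF True] by simp
    also have "\<dots> = (\<Sum>e<n. Wk n x a c e * ((Pw n x b e - Wk n x b e d) * x d))"
      unfolding P Suc.IH by (simp add: sum_subtractf[symmetric] sum_distrib_right sum_distrib_left algebra_simps)
    also have "\<dots> = (\<Sum>e<n. Wk n x a c e * Wk n x (Suc b) e d)"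
      using Wk_last[OF True] by simp
    finally show ?thesis .
  next
    case False
    then show ?thesis by (simp add: Wk_out)
  qed
qed

lemma Wk1: "c < n \<Longrightarrow> e < n \<Longrightarrow> Wk n x (Suc 0) c e = (if e = c then 0 else x e)"
  using Wk_last[of e n x 0 c] by (auto simp: Pw0 Wk0)

lemma sum_if_remove: "c < (n::nat) \<Longrightarrow> (\<Sum>e<n. if e = c then 0 else g e) = (\<Sum>e<n. g e) - (g c :: real)"
proof -
  assume c: "c < n"
  have "(\<Sum>e<n. g e) = (\<Sum>e<n. if e = c then 0 else g e) + (\<Sum>e<n. if e = c then g e else 0)"
    by (subst sum.distrib[symmetric]) (rule sum.cong, auto)
  moreover have "(\<Sum>e<n. if e = c then g e else 0) = g c" using c by (simp add: sum.delta)
  ultimately show ?thesis by simp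
qed

lemma Wk_first: "c < n \<Longrightarrow> Wk n x (Suc k) c d = (\<Sum>e<n. x e * Wk n x k e d) - x c * Wk n x k c d"
proof -
  assume c: "c < n"
  have "Wk n x (Suc k) c d = Wk n x (1 + k) c d" by simp
  also have "\<dots> = (\<Sum>e<n. Wk n x 1 c e * Wk n x k e d)" by (rule Wk_assoc)
  also have "\<dots> = (\<Sum>e<n. if e = c then 0 else x e * Wk n x k e d)"
    by (rule sum.cong) (auto simp: Wk1 c)
  also have "\<dots> = (\<Sum>e<n. x e * Wk n x k e d) - x c * Wk n x k c d"
    by (rule sum_if_remove[OF c])
  finally show ?thesis .
qed

lemma Pw_first: "c < n \<Longrightarrow> Pw n x (Suc k) c = (\<Sum>a<n. x a * Pw n x k a) - x c * Pw n x k c"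
proof -
  assume c: "c < n"
  have "Pw n x (Suc k) c = (\<Sum>d<n. (\<Sum>e<n. x e * Wk n x k e d) - x c * Wk n x k c d)"
    unfolding Pw_def by (rule sum.cong) (auto simp: Wk_first c)
  also have "\<dots> = (\<Sum>a<n. x a * Pw n x k a) - x c * Pw n x k c"
    unfolding Pw_def by (simp add: sum_subtractf sum_distrib_left) (rule sum.swap)
  finally show ?thesis .
qed

lemma Wk_sym: "x c * Wk n x k c d = x d * Wk n x k d c"
proof (induction k arbitrary: c d)
  case 0
  then show ?case by (auto simp: Wk0)
next
  case (Suc k)
  show ?case
  proof (cases "c < n \<and> d < n")
    case True
    then have c: "c < n" and d: "d < n" by auto
    have "x d * Wk n x (Suc k) d c = x d * ((\<Sum>e<n. x e * Wk n x k e c) - x d * Wk n x k d c)"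
      by (simp add: Wk_first d)
    also have "\<dots> = x d * ((\<Sum>e<n. x c * Wk n x k c e) - x c * Wk n x k c d)"
      using Suc.IH by (metis (no_types, lifting) sum.cong)
    also have "\<dots> = x c * Wk n x (Suc k) c d"
      by (simp add: Wk_last d Pw_def sum_distrib_left algebra_simps)
    finally show ?thesis by simp
  next
    case False
    then show ?thesis by (auto simp: Wk_out)
  qed
qed

lemma Pw_assoc: "Pw n x (k + j) d = (\<Sum>c<n. Wk n x k d c * Pw n x j c)"
  unfolding Pw_def Wk_assoc by (simp add: sum_distrib_left) (rule sum.swap)

definition Tr :: "nat \<Rightarrow> (nat \<Rightarrow> real) \<Rightarrow> nat \<Rightarrow> real" where
  "Tr n x j = (\<Sum>c<n. Wk n x j c c)"

lemma Zid: "c < n \<Longrightarrow> Wk n x (Suc m) c c + real m * Pw n x (Suc m) c =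
   (\<Sum>j<m. Tr n x (Suc m - j) * Pw n x j c)"
proof (induction m arbitrary: c)
  case 0
  then show ?case by (simp add: Wk1)
next
  case (Suc m)
  define M where "M = Suc m"
  define S where "S j = (\<Sum>a<n. x a * Pw n x j a)" for j
  define A where "A = (\<Sum>j<m. Tr n x (Suc m - j) * Pw n x j c)"
  define B where "B = (\<Sum>j<m. Tr n x (Suc m - j) * S j)"
  have c: "c < n" by fact
  have ea: "Wk n x (Suc M) c c = (Pw n x M c - Wk n x M c c) * x c" by (simp add: Wk_last c)
  have eb: "Pw n x (Suc M) c = S M - x c * Pw n x M c" by (simp add: Pw_first c S_def)
  have ec: "(\<Sum>j<Suc m. Tr n x (Suc (Suc m) - j) * Pw n x j c) =
       Tr n x (Suc M) + (\<Sum>j<m. Tr n x (Suc m - j) * Pw n x (Suc j) c)"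
    by (subst sum.lessThan_Suc_shift) (simp add: Pw0 c M_def)
  have ed: "(\<Sum>j<m. Tr n x (Suc m - j) * Pw n x (Suc j) c) = B - x c * A"
    unfolding A_def B_def
    by (simp add: Pw_first c S_def sum_distrib_left sum_subtractf algebra_simps)
  have ee: "Tr n x (Suc M) = S M - (\<Sum>a<n. x a * Wk n x M a a)"
    unfolding Tr_def S_def by (simp add: Wk_last sum_subtractf sum_distrib_left algebra_simps Pw_def)
  have "(\<Sum>a<n. x a * Wk n x M a a) = (\<Sum>a<n. x a * ((\<Sum>j<m. Tr n x (Suc m - j) * Pw n x j a) - real m * Pw n x M a))"
  proof (rule sum.cong[OF refl])
    fix a assume "a \<in> {..<n}"
    then have "Wk n x M a a = (\<Sum>j<m. Tr n x (Suc m - j) * Pw n x j a) - real m * Pw n x M a"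
      using Suc.IH[of a] unfolding M_def by (simp add: eq_diff_eq)
    then show "x a * Wk n x M a a = x a * ((\<Sum>j<m. Tr n x (Suc m - j) * Pw n x j a) - real m * Pw n x M a)"
      by simp
  qed
  also have "\<dots> = B - real m * S M"
    unfolding B_def S_def
    by (simp add: sum_subtractf sum_distrib_left algebra_simps) (rule sum.swap)
  finally have ef: "(\<Sum>a<n. x a * Wk n x M a a) = B - real m * S M" .
  have eg: "Wk n x M c c = A - real m * Pw n x M c"
    using Suc.IH[OF c] unfolding A_def M_def by simp
  show ?case
    unfolding ec ed ee ef
    unfolding M_def[symmetric] ea eb eg
    by (simp add: algebra_simps M_def)
qed



definition PE :: "nat \<Rightarrow> nat set set" where "PE k = {{i, Suc i} | i. i < k}"

lemma pc_path: "proper_colorings ({..k}, PE k) n = walks n k"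
  unfolding proper_colorings_def walks_def PE_def
proof (intro set_eqI iffI)
  fix p assume "p \<in> {\<kappa> \<in> verts ({..k}, {{i, Suc i} |i. i < k}) \<rightarrow>\<^sub>E {..<n}.
        \<forall>a b. {a, b} \<in> edges ({..k}, {{i, Suc i} |i. i < k}) \<longrightarrow> a \<noteq> b \<longrightarrow> \<kappa> a \<noteq> \<kappa> b}"
  then have a1: "p \<in> {..k} \<rightarrow>\<^sub>E {..<n}"
    and a2: "\<forall>a b. {a, b} \<in> {{i, Suc i} |i. i < k} \<longrightarrow> a \<noteq> b \<longrightarrow> p a \<noteq> p b" by auto
  have "\<forall>i<k. p i \<noteq> p (Suc i)"
  proof (intro allI impI)
    fix i assume "i < k"
    then have "{i, Suc i} \<in> {{i, Suc i} |i. i < k}" by blast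
    then show "p i \<noteq> p (Suc i)" using a2 by simp
  qed
  then show "p \<in> {p \<in> {..k} \<rightarrow>\<^sub>E {..<n}. \<forall>i<k. p i \<noteq> p (Suc i)}" using a1 by simp
next
  fix p assume a: "p \<in> {p \<in> {..k} \<rightarrow>\<^sub>E {..<n}. \<forall>i<k. p i \<noteq> p (Suc i)}"
  show "p \<in> {\<kappa> \<in> verts ({..k}, {{i, Suc i} |i. i < k}) \<rightarrow>\<^sub>E {..<n}.
        \<forall>a b. {a, b} \<in> edges ({..k}, {{i, Suc i} |i. i < k}) \<longrightarrow> a \<noteq> b \<longrightarrow> \<kappa> a \<noteq> \<kappa> b}"
  proof (intro CollectI conjI allI impI)
    show "p \<in> verts ({..k}, {{i, Suc i} |i. i < k}) \<rightarrow>\<^sub>E {..<n}" using a by simp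
  next
    fix x y assume "{x, y} \<in> edges ({..k}, {{i, Suc i} |i. i < k})" "x \<noteq> y"
    then obtain i where i: "i < k" "{x, y} = {i, Suc i}" by auto
    then have "(x = i \<and> y = Suc i) \<or> (x = Suc i \<and> y = i)" by (auto simp: doubleton_eq_iff)
    then show "p x \<noteq> p y" using a i by auto
  qed
qed

lemma wf_PE: "\<forall>e\<in>PE k. \<exists>a b. a \<in> {..k} \<and> b \<in> {..k} \<and> e = {a, b}"
proof
  fix e assume "e \<in> PE k"
  then obtain i where "i < k" "e = {i, Suc i}" unfolding PE_def by blast
  then show "\<exists>a b. a \<in> {..k} \<and> b \<in> {..k} \<and> e = {a, b}"
    by (intro exI[where x = i] exI[where x = "Suc i"]) auto
qed

lemma edges_image:
  assumes "\<forall>e\<in>E. \<exists>a b. e = {a, b}"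
  shows "{{f a, f a'} | a a'. {a, a'} \<in> E} = (\<lambda>e. f ` e) ` E"
proof (intro set_eqI iffI)
  fix s assume "s \<in> {{f a, f a'} | a a'. {a, a'} \<in> E}"
  then obtain a a' where "s = {f a, f a'}" "{a, a'} \<in> E" by auto
  moreover have "{f a, f a'} = f ` {a, a'}" by simp
  ultimately show "s \<in> (\<lambda>e. f ` e) ` E" by (metis image_eqI)
next
  fix s assume "s \<in> (\<lambda>e. f ` e) ` E"
  then obtain e where e: "e \<in> E" "s = f ` e" by auto
  then obtain a b where "e = {a, b}" using assms by auto
  then show "s \<in> {{f a, f a'} | a a'. {a, a'} \<in> E}" using e by auto
qed

lemma path_prod:
  fixes G :: "nat \<Rightarrow> nat \<Rightarrow> real"
  assumes k: "0 < k"
    and G0: "G 0 = (\<lambda>c'. if c' = c then 1 else 0)"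
    and Gk: "G k = (\<lambda>c'. if c' = d then x c' else 0)"
    and Gi: "\<And>i. 0 < i \<Longrightarrow> i < k \<Longrightarrow> G i = x"
  shows "(\<Prod>i\<in>{..k}. G i (p i)) = (if p 0 = c \<and> p k = d then \<Prod>i\<in>{1..k}. x (p i) else 0)"
proof -
  have s1: "{..k} = insert 0 {1..k}" by auto
  have s2: "{1..k} = insert k {1..<k}" using k by auto
  have "(\<Prod>i\<in>{..k}. G i (p i)) = G 0 (p 0) * (\<Prod>i\<in>{1..k}. G i (p i))"
    unfolding s1 by (rule prod.insert) auto
  also have "(\<Prod>i\<in>{1..k}. G i (p i)) = G k (p k) * (\<Prod>i\<in>{1..<k}. G i (p i))"
    unfolding s2 by (rule prod.insert) auto
  also have "(\<Prod>i\<in>{1..<k}. G i (p i)) = (\<Prod>i\<in>{1..<k}. x (p i))"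
    by (rule prod.cong) (auto simp: Gi)
  also have "(\<Prod>i\<in>{1..k}. x (p i)) = x (p k) * (\<Prod>i\<in>{1..<k}. x (p i))"
    unfolding s2 by (rule prod.insert) auto
  ultimately show ?thesis using G0 Gk by simp
qed

lemma graph_eta: "(verts G, edges G) = G" by (simp add: verts_def edges_def)

lemma Pk_decomp:
  fixes G :: "'a graph" and H :: "'b graph"
  assumes finG: "finite (verts G)" and finH: "finite (verts H)"
    and uG: "u \<in> verts G" and wH: "w \<in> verts H"
    and wfG: "\<forall>e\<in>edges G. \<exists>a b. a \<in> verts G \<and> b \<in> verts G \<and> e = {a, b}"
    and wfH: "\<forall>e\<in>edges H. \<exists>a b. a \<in> verts H \<and> b \<in> verts H \<and> e = {a, b}"
  shows "CSF (Pk k G u H w) n x = (\<Sum>d<n. (\<Sum>c<n. x c * RS G u n x c * Wk n x k c d) * RS H w n x d)"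
proof -
  define fG where "fG = Pk_vG k u w"
  define fH :: "'b \<Rightarrow> ('a + 'b) + nat" where "fH = (\<lambda>b. Inl (Inr b))"
  define pth where "pth = Pk_path k u w"
  define VG where "VG = fG ` verts G"
  define EG where "EG = (\<lambda>e. fG ` e) ` edges G"
  define VP where "VP = pth ` {..k}"
  define EP where "EP = (\<lambda>e. pth ` e) ` PE k"
  define VH where "VH = fH ` verts H"
  define EH where "EH = (\<lambda>e. fH ` e) ` edges H"
  define zH :: "('a + 'b) + nat" where "zH = Inl (Inr w)"
  define zG where "zG = pth 0"
  have zG': "zG = fG u" by (simp add: zG_def pth_def fG_def Pk_path_def)
  have pthk: "pth k = zH" by (simp add: pth_def zH_def Pk_path_def Pk_vG_def)
  have injG: "inj_on fG (verts G)" by (auto simp: inj_on_def fG_def Pk_vG_def split: if_splits)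
  have injH: "inj_on fH (verts H)" by (auto simp: inj_on_def fH_def)
  have injP: "inj_on pth {..k}" by (auto simp: inj_on_def pth_def Pk_path_def Pk_vG_def split: if_splits)
  have finVG: "finite VG" and finVP: "finite VP" and finVH: "finite VH"
    using finG finH by (auto simp: VG_def VP_def VH_def)
  have Pk_eq: "Pk k G u H w = (VG \<union> VP \<union> VH, EG \<union> EP \<union> EH)"
  proof -
    have p1: "pth ` {..k} \<subseteq> fG ` verts G \<union> fH ` verts H \<union> Inr ` {1..<k}"
    proof
      fix y assume "y \<in> pth ` {..k}"
      then obtain i where i: "i \<le> k" "y = pth i" by auto
      show "y \<in> fG ` verts G \<union> fH ` verts H \<union> Inr ` {1..<k}"
      proof (cases "i = 0")
        case True then show ?thesis using i uG by (simp add: pth_def Pk_path_def fG_def)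
      next
        case False
        show ?thesis
        proof (cases "i < k")
          case True then show ?thesis using i False by (simp add: pth_def Pk_path_def)
        next
          case F2: False
          then have "y = fH w" using i False by (simp add: pth_def Pk_path_def fH_def)
          then show ?thesis using wH by blast
        qed
      qed
    qed
    have p2: "Inr ` {1..<k} \<subseteq> pth ` {..k}"
    proof
      fix y assume "y \<in> (Inr ` {1..<k} :: (('a + 'b) + nat) set)"
      then obtain i where i: "1 \<le> i" "i < k" "y = Inr i" by auto
      then have "y = pth i" by (simp add: pth_def Pk_path_def)
      then show "y \<in> pth ` {..k}" using i by auto
    qed
    have v: "fG ` verts G \<union> fH ` verts H \<union> Inr ` {1..<k} = VG \<union> VP \<union> VH"
      unfolding VG_def VP_def VH_def using p1 p2 by blast
    have e1: "{{fG a, fG a'} | a a'. {a, a'} \<in> edges G} = EG"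
      unfolding EG_def by (rule edges_image) (use wfG in blast)
    have e2: "{{Inl (Inr b), Inl (Inr b')} | b b'. {b, b'} \<in> edges H} = EH"
    proof -
      have "{{fH b, fH b'} | b b'. {b, b'} \<in> edges H} = EH"
        unfolding EH_def by (rule edges_image) (use wfH in blast)
      then show ?thesis by (simp add: fH_def)
    qed
    have e3: "{{pth i, pth (i + 1)} | i. i < k} = EP"
    proof (intro set_eqI iffI)
      fix s assume "s \<in> {{pth i, pth (i + 1)} | i. i < k}"
      then obtain i where i: "i < k" "s = {pth i, pth (i + 1)}" by blast
      then have "s = pth ` {i, Suc i}" by simp
      moreover have "{i, Suc i} \<in> PE k" using i unfolding PE_def by blast
      ultimately show "s \<in> EP" unfolding EP_def by blast
    next
      fix s assume "s \<in> EP"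
      then obtain i where i: "i < k" "s = pth ` {i, Suc i}" unfolding EP_def PE_def by blast
      then have "s = {pth i, pth (i + 1)}" by simp
      then show "s \<in> {{pth i, pth (i + 1)} | i. i < k}" using i by blast
    qed
    show ?thesis
      unfolding Pk_def fG_def[symmetric] pth_def[symmetric]
      using v e1 e2 e3 by (simp add: fH_def Un_ac)
  qed
  have I1: "(VG \<union> VP) \<inter> VH = {zH}"
  proof (intro equalityI subsetI)
    fix y assume y: "y \<in> (VG \<union> VP) \<inter> VH"
    then obtain b where b: "y = Inl (Inr b)" by (auto simp: VH_def fH_def)
    from y consider a where "a \<in> verts G" "y = fG a" | i where "i \<le> k" "y = pth i"
      by (auto simp: VG_def VP_def)
    then show "y \<in> {zH}"
    proof cases
      case 1 then show ?thesis using b by (auto simp: fG_def Pk_vG_def zH_def split: if_splits)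
    next
      case 2 then show ?thesis using b
        by (auto simp: pth_def Pk_path_def fG_def Pk_vG_def zH_def split: if_splits)
    qed
  next
    fix y assume "y \<in> {zH}"
    then show "y \<in> (VG \<union> VP) \<inter> VH"
      using pthk wH by (auto simp: VP_def VH_def fH_def zH_def intro!: image_eqI[where x = k])
  qed
  have I2: "VG \<inter> VP = {zG}"
  proof (intro equalityI subsetI)
    fix y assume y: "y \<in> VG \<inter> VP"
    then obtain a i where a: "a \<in> verts G" "y = fG a" and i: "i \<le> k" "y = pth i"
      by (auto simp: VG_def VP_def)
    show "y \<in> {zG}"
    proof (cases "i = 0")
      case True then show ?thesis using i zG_def by simp
    next
      case False
      then show ?thesis using a i
        by (auto simp: pth_def Pk_path_def fG_def Pk_vG_def split: if_splits)
    qed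
  next
    fix y assume "y \<in> {zG}"
    then show "y \<in> VG \<inter> VP" using zG' zG_def uG by (auto simp: VG_def VP_def intro!: image_eqI[where x = 0])
  qed
  have EGc: "\<forall>e\<in>EG. e \<subseteq> VG" using wfG by (force simp: EG_def VG_def)
  have EPc: "\<forall>e\<in>EP. e \<subseteq> VP" by (auto simp: EP_def VP_def PE_def)
  have EHc: "\<forall>e\<in>EH. e \<subseteq> VH" using wfH by (force simp: EH_def VH_def)
  have EGPc: "\<forall>e\<in>EG \<union> EP. e \<subseteq> VG \<union> VP" using EGc EPc by blast
  have HH: "CSw (VH, EH) n ((\<lambda>_. x)(zH := \<lambda>c'. if c' = d then 1 else 0)) = RS H w n x d" for d
  proof -
    have "CSw (VH, EH) n ((\<lambda>_. x)(zH := \<lambda>c'. if c' = d then 1 else 0)) =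
          CSw (verts H, edges H) n (\<lambda>a. ((\<lambda>_. x)(zH := \<lambda>c'. if c' = d then 1 else 0)) (fH a))"
      unfolding VH_def EH_def by (rule CSw_relabel[OF injH finH wfH])
    also have "(\<lambda>a. ((\<lambda>_. x)(zH := \<lambda>c'. if c' = d then 1 else 0)) (fH a)) =
               (\<lambda>_. x)(w := \<lambda>c'. if c' = d then 1 else 0)"
      by (rule ext) (auto simp: fH_def zH_def)
    finally show ?thesis unfolding RS_def graph_eta .
  qed
  have GP: "CSw (VG \<union> VP, EG \<union> EP) n ((\<lambda>_. x)(zH := \<lambda>c'. if c' = d then x c' else 0)) =
            (\<Sum>c<n. x c * RS G u n x c * Wk n x k c d)" if d: "d < n" for d
  proof -
    define F where "F = (\<lambda>_. x)(zH := \<lambda>c'. if c' = d then x c' else 0)"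
    have "CSw (VG \<union> VP, EG \<union> EP) n F =
      (\<Sum>c<n. CSw (VG, EG) n (F(zG := \<lambda>c'. if c' = c then F zG c' else 0)) *
              CSw (VP, EP) n (F(zG := \<lambda>c'. if c' = c then 1 else 0)))"
      by (rule CSw_cut[OF finVG finVP I2 EGc EPc])
    also have "\<dots> = (\<Sum>c<n. x c * RS G u n x c * Wk n x k c d)"
    proof (cases "k = 0")
      case True
      have zz: "zG = zH" using True by (simp add: zG_def pth_def Pk_path_def Pk_vG_def zH_def)
      show ?thesis
      proof (rule sum.cong[OF refl])
        fix c assume c: "c \<in> {..<n}"
        have a1: "CSw (VG, EG) n (F(zG := \<lambda>c'. if c' = c then F zG c' else 0)) =
               CSw (verts G, edges G) n (\<lambda>a. (F(zG := \<lambda>c'. if c' = c then F zG c' else 0)) (fG a))"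
          unfolding VG_def EG_def by (rule CSw_relabel[OF injG finG wfG])
        have a2: "(\<lambda>a. (F(zG := \<lambda>c'. if c' = c then F zG c' else 0)) (fG a)) =
                  (\<lambda>_. x)(u := \<lambda>c'. if c' = c then (if c' = d then x c' else 0) else 0)"
          by (rule ext) (auto simp: F_def zz fG_def Pk_vG_def zH_def True)
        have a3: "CSw (VG, EG) n (F(zG := \<lambda>c'. if c' = c then F zG c' else 0)) =
                  (if c = d then x c else 0) * RS G u n x c"
          unfolding a1 a2 graph_eta
          by (rule CSw_root_g[OF finG uG, where g = "\<lambda>c'. if c' = d then x c' else 0", simplified])
        have b1: "CSw (VP, EP) n (F(zG := \<lambda>c'. if c' = c then 1 else 0)) =
                  CSw ({..k}, PE k) n (\<lambda>i. (F(zG := \<lambda>c'. if c' = c then 1 else 0)) (pth i))"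
          unfolding VP_def EP_def
          by (rule CSw_relabel[OF injP finite_atMost wf_PE])
        have b2: "CSw ({..k}, PE k) n (\<lambda>i. (F(zG := \<lambda>c'. if c' = c then 1 else 0)) (pth i)) = 1"
        proof -
          have "CSw ({..k}, PE k) n (\<lambda>i. (F(zG := \<lambda>c'. if c' = c then 1 else 0)) (pth i)) =
                (\<Sum>p\<in>walks n 0. if p 0 = c then 1 else 0)"
            unfolding CSw_def pc_path using True by (simp add: zG_def)
          also have "\<dots> = Pw n x 0 c"
            unfolding Pw_walks sum.inter_filter[OF finite_walks] by (rule sum.cong) auto
          also have "\<dots> = 1" using c by (simp add: Pw0)
          finally show ?thesis .
        qed
        show "CSw (VG, EG) n (F(zG := \<lambda>c'. if c' = c then F zG c' else 0)) *
              CSw (VP, EP) n (F(zG := \<lambda>c'. if c' = c then 1 else 0)) =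
              x c * RS G u n x c * Wk n x k c d"
          unfolding a3 b1 b2 using True d by (simp add: Wk0)
      qed
    next
      case False
      have zz: "zG \<noteq> zH" using False by (simp add: zG_def pth_def Pk_path_def Pk_vG_def zH_def)
      show ?thesis
      proof (rule sum.cong[OF refl])
        fix c assume c: "c \<in> {..<n}"
        have a1: "CSw (VG, EG) n (F(zG := \<lambda>c'. if c' = c then F zG c' else 0)) =
               CSw (verts G, edges G) n (\<lambda>a. (F(zG := \<lambda>c'. if c' = c then F zG c' else 0)) (fG a))"
          unfolding VG_def EG_def by (rule CSw_relabel[OF injG finG wfG])
        have a2: "(\<lambda>a. (F(zG := \<lambda>c'. if c' = c then F zG c' else 0)) (fG a)) =
                  (\<lambda>_. x)(u := \<lambda>c'. if c' = c then x c' else 0)"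
          using zz by (intro ext) (auto simp: F_def zG' fG_def Pk_vG_def zH_def False)
        have a3: "CSw (VG, EG) n (F(zG := \<lambda>c'. if c' = c then F zG c' else 0)) = x c * RS G u n x c"
          unfolding a1 a2 graph_eta by (rule CSw_root_g[OF finG uG])
        have b1: "CSw (VP, EP) n (F(zG := \<lambda>c'. if c' = c then 1 else 0)) =
                  CSw ({..k}, PE k) n (\<lambda>i. (F(zG := \<lambda>c'. if c' = c then 1 else 0)) (pth i))"
          unfolding VP_def EP_def
          by (rule CSw_relabel[OF injP finite_atMost wf_PE])
        have b2: "CSw ({..k}, PE k) n (\<lambda>i. (F(zG := \<lambda>c'. if c' = c then 1 else 0)) (pth i)) = Wk n x k c d"
        proof -
          have pp: "(\<Prod>i\<in>{..k}. (F(zG := \<lambda>c'. if c' = c then 1 else 0)) (pth i) (p i)) =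
                (if p 0 = c \<and> p k = d then \<Prod>i\<in>{1..k}. x (p i) else 0)" for p
          proof (rule path_prod)
            show "0 < k" using False by simp
            show "(F(zG := \<lambda>c'. if c' = c then 1 else 0)) (pth 0) = (\<lambda>c'. if c' = c then 1 else 0)"
              by (simp add: zG_def)
            show "(F(zG := \<lambda>c'. if c' = c then 1 else 0)) (pth k) = (\<lambda>c'. if c' = d then x c' else 0)"
              using zz by (simp add: pthk F_def)
            show "(F(zG := \<lambda>c'. if c' = c then 1 else 0)) (pth i) = x" if "0 < i" "i < k" for i
              using that by (simp add: F_def pth_def Pk_path_def zG_def zH_def Pk_vG_def)
          qed
          have "CSw ({..k}, PE k) n (\<lambda>i. (F(zG := \<lambda>c'. if c' = c then 1 else 0)) (pth i)) =
                (\<Sum>p\<in>walks n k. if p 0 = c \<and> p k = d then \<Prod>i\<in>{1..k}. x (p i) else 0)"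
            unfolding CSw_def pc_path by (simp only: verts_pair pp)
          also have "\<dots> = Wk n x k c d"
            unfolding Wk_def sum.inter_filter[OF finite_walks] ..
          finally show ?thesis .
        qed
        show "CSw (VG, EG) n (F(zG := \<lambda>c'. if c' = c then F zG c' else 0)) *
              CSw (VP, EP) n (F(zG := \<lambda>c'. if c' = c then 1 else 0)) =
              x c * RS G u n x c * Wk n x k c d"
          unfolding a3 b1 b2 by simp
      qed
    qed
    finally show ?thesis unfolding F_def .
  qed
  have "CSF (Pk k G u H w) n x = CSw (VG \<union> VP \<union> VH, EG \<union> EP \<union> EH) n (\<lambda>_. x)"
    by (simp add: CSF_CSw Pk_eq)
  also have "\<dots> = (\<Sum>d<n. CSw (VG \<union> VP, EG \<union> EP) n ((\<lambda>_. x)(zH := \<lambda>c'. if c' = d then x c' else 0)) *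
       CSw (VH, EH) n ((\<lambda>_. x)(zH := \<lambda>c'. if c' = d then 1 else 0)))"
    by (rule CSw_cut) (use finVG finVP finVH I1 EGPc EHc in auto)
  also have "\<dots> = (\<Sum>d<n. (\<Sum>c<n. x c * RS G u n x c * Wk n x k c d) * RS H w n x d)"
    by (rule sum.cong[OF refl]) (simp add: GP HH)
  finally show ?thesis .
qed



lemma Pw_minus: "(\<Sum>p\<in>{p \<in> walks n k. p 0 = c \<and> p k \<noteq> d}. \<Prod>i\<in>{1..k}. x (p i)) = Pw n x k c - Wk n x k c d"
proof -
  let ?T = "{p \<in> walks n k. p 0 = c \<and> p k \<noteq> d}"
  have "{p \<in> walks n k. p 0 = c} = ?T \<union> {p \<in> walks n k. p 0 = c \<and> p k = d}" by auto
  moreover have "?T \<inter> {p \<in> walks n k. p 0 = c \<and> p k = d} = {}" by auto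
  ultimately have "Pw n x k c = (\<Sum>p\<in>?T. \<Prod>i\<in>{1..k}. x (p i)) + Wk n x k c d"
    unfolding Pw_walks Wk_def by (simp add: sum.union_disjoint)
  then show ?thesis by simp
qed

lemma cyc_verts: "verts (cycle_graph g) = {..<g}" by (simp add: cycle_graph_def)
lemma cyc_edges: "edges (cycle_graph g) = {{i, (i + 1) mod g} | i. i < g}" by (simp add: cycle_graph_def)

lemma cyc_wf: "\<forall>e\<in>edges (cycle_graph g). \<exists>a b. a \<in> verts (cycle_graph g) \<and> b \<in> verts (cycle_graph g) \<and> e = {a, b}"
proof
  fix e assume "e \<in> edges (cycle_graph g)"
  then obtain i where i: "i < g" "e = {i, (i + 1) mod g}" by (auto simp: cyc_edges)
  then show "\<exists>a b. a \<in> verts (cycle_graph g) \<and> b \<in> verts (cycle_graph g) \<and> e = {a, b}"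
    by (intro exI[where x = i] exI[where x = "(i + 1) mod g"]) (auto simp: cyc_verts)
qed

lemma pc_cycle:
  assumes g: "g \<ge> 2"
  shows "proper_colorings (cycle_graph g) n = {p \<in> walks n (g - 1). p (g - 1) \<noteq> p 0}"
proof -
  have V: "{..<g} = {..g - 1}" using g by auto
  have "(\<forall>a b. {a, b} \<in> {{i, (i + 1) mod g} | i. i < g} \<longrightarrow> a \<noteq> b \<longrightarrow> p a \<noteq> p b) \<longleftrightarrow>
        ((\<forall>i<g - 1. p i \<noteq> p (Suc i)) \<and> p (g - 1) \<noteq> p 0)" for p :: "nat \<Rightarrow> nat"
  proof
    assume a: "\<forall>a b. {a, b} \<in> {{i, (i + 1) mod g} | i. i < g} \<longrightarrow> a \<noteq> b \<longrightarrow> p a \<noteq> p b"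
    have "p i \<noteq> p (Suc i)" if "i < g - 1" for i
    proof -
      have "(i + 1) mod g = Suc i" using that by simp
      then have "{i, Suc i} \<in> {{i, (i + 1) mod g} | i. i < g}" using that by (metis (mono_tags, lifting) CollectI less_imp_diff_less not_less_eq not_less_zero zero_less_diff Suc_lessD diff_Suc_1 less_diff_conv)
      then show ?thesis using a by simp
    qed
    moreover have "p (g - 1) \<noteq> p 0"
    proof -
      have "(g - 1 + 1) mod g = 0" using g by simp
      then have "{g - 1, 0} \<in> {{i, (i + 1) mod g} | i. i < g}" using g
        by (metis (mono_tags, lifting) CollectI diff_less zero_less_one less_le_trans zero_less_numeral)
      moreover have "g - 1 \<noteq> 0" using g by simp
      ultimately show ?thesis using a by blast
    qed
    ultimately show "(\<forall>i<g - 1. p i \<noteq> p (Suc i)) \<and> p (g - 1) \<noteq> p 0" by blast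
  next
    assume a: "(\<forall>i<g - 1. p i \<noteq> p (Suc i)) \<and> p (g - 1) \<noteq> p 0"
    show "\<forall>a b. {a, b} \<in> {{i, (i + 1) mod g} | i. i < g} \<longrightarrow> a \<noteq> b \<longrightarrow> p a \<noteq> p b"
    proof (intro allI impI)
      fix x y assume "{x, y} \<in> {{i, (i + 1) mod g} | i. i < g}" "x \<noteq> y"
      then obtain i where i: "i < g" "{x, y} = {i, (i + 1) mod g}" by blast
      have ne: "p i \<noteq> p ((i + 1) mod g)"
      proof (cases "i < g - 1")
        case True
        then have "(i + 1) mod g = Suc i" by simp
        then show ?thesis using a True by simp
      next
        case False
        then have "i = g - 1" using i by simp
        moreover have "(g - 1 + 1) mod g = 0" using g by simp
        ultimately show ?thesis using a by simp
      qed
      from i(2) have "(x = i \<and> y = (i + 1) mod g) \<or> (x = (i + 1) mod g \<and> y = i)"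
        by (auto simp: doubleton_eq_iff)
      then show "p x \<noteq> p y" using ne by auto
    qed
  qed
  then show ?thesis
    unfolding proper_colorings_def walks_def cyc_verts cyc_edges V by auto
qed

lemma RS_cycle:
  assumes g: "g \<ge> 2" and c: "c < n"
  shows "RS (cycle_graph g) 0 n x c = Pw n x (g - 1) c - Wk n x (g - 1) c c"
proof -
  have fin: "finite (verts (cycle_graph g))" by (simp add: cyc_verts)
  have z: "0 \<in> verts (cycle_graph g)" using g by (simp add: cyc_verts)
  have V: "verts (cycle_graph g) - {0} = {1..g - 1}" using g by (auto simp: cyc_verts)
  have "RS (cycle_graph g) 0 n x c =
        (\<Sum>p\<in>{p \<in> walks n (g - 1). p (g - 1) \<noteq> p 0}. if p 0 = c then 1 * (\<Prod>i\<in>{1..g - 1}. x (p i)) else 0)"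
    unfolding RS_def CSw_def pc_cycle[OF g]
    by (simp only: prod_upd_delta[OF fin z, where g = "\<lambda>_. 1"] V)
  also have "\<dots> = (\<Sum>p\<in>{p \<in> walks n (g - 1). p 0 = c \<and> p (g - 1) \<noteq> c}. \<Prod>i\<in>{1..g - 1}. x (p i))"
    by (simp add: sum.inter_filter) (rule sum.cong, auto)
  also have "\<dots> = Pw n x (g - 1) c - Wk n x (g - 1) c c" by (rule Pw_minus)
  finally show ?thesis .
qed

lemma CSF_cycle:
  assumes g: "g \<ge> 2"
  shows "CSF (cycle_graph g) n x = Tr n x g"
proof -
  have fin: "finite (verts (cycle_graph g))" by (simp add: cyc_verts)
  have z: "0 \<in> verts (cycle_graph g)" using g by (simp add: cyc_verts)
  have gg: "g = Suc (g - 1)" using g by simp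
  have "CSF (cycle_graph g) n x = (\<Sum>c<n. x c * RS (cycle_graph g) 0 n x c)" by (rule CSF_root[OF fin z])
  also have "\<dots> = (\<Sum>c<n. Wk n x g c c)"
  proof (rule sum.cong[OF refl])
    fix c assume "c \<in> {..<n}"
    then have c: "c < n" by simp
    have "Wk n x g c c = Wk n x (Suc (g - 1)) c c" using gg by simp
    also have "\<dots> = (Pw n x (g - 1) c - Wk n x (g - 1) c c) * x c" by (rule Wk_last[OF c])
    finally show "x c * RS (cycle_graph g) 0 n x c = Wk n x g c c"
      by (simp add: RS_cycle[OF g c])
  qed
  finally show ?thesis by (simp add: Tr_def)
qed

lemma RS_K1: "d < n \<Longrightarrow> RS K1 0 n x d = 1"
proof -
  assume d: "d < n"
  have pc: "proper_colorings K1 n = walks n 0" by (simp add: proper_colorings_def K1_def walks0 atMost_0)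
  have "RS K1 0 n x d = (\<Sum>p\<in>walks n 0. if p 0 = d then 1 else 0)"
    unfolding RS_def CSw_def pc by (simp add: K1_def)
  also have "\<dots> = Pw n x 0 d"
    unfolding Pw_walks sum.inter_filter[OF finite_walks] by (rule sum.cong) auto
  also have "\<dots> = 1" using d by (simp add: Pw0)
  finally show ?thesis .
qed



lemma simple_wf:
  assumes "simple_graph H"
  shows "finite (verts H)" "\<forall>e\<in>edges H. \<exists>a b. a \<in> verts H \<and> b \<in> verts H \<and> e = {a, b}"
  using assms unfolding simple_graph_def by blast+

lemma CSF_tailed:
  assumes H: "simple_graph H" and v: "v \<in> verts H"
  shows "CSF (tailed H v m) n x = (\<Sum>c<n. x c * RS H v n x c * Pw n x m c)"
proof -
  have "CSF (tailed H v m) n x = (\<Sum>d<n. (\<Sum>c<n. x c * RS H v n x c * Wk n x m c d) * RS K1 0 n x d)"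
    unfolding tailed_def
    by (rule Pk_decomp[OF simple_wf(1)[OF H] _ v _ simple_wf(2)[OF H]]) (auto simp: K1_def)
  also have "\<dots> = (\<Sum>d<n. \<Sum>c<n. x c * RS H v n x c * Wk n x m c d)"
    by (rule sum.cong[OF refl]) (simp add: RS_K1)
  also have "\<dots> = (\<Sum>c<n. x c * RS H v n x c * Pw n x m c)"
    unfolding Pw_def by (subst sum.swap) (simp add: sum_distrib_left)
  finally show ?thesis .
qed

theorem proposition3p2:
  fixes H :: "'a graph" and v :: 'a and k g n :: nat and x :: "nat \<Rightarrow> real"
  assumes "simple_graph H" and "v \<in> verts H" and "g \<ge> 2"
  shows "CSF (Pk k (cycle_graph g) 0 H v) n x =
           of_nat (g - 1) * CSF (tailed H v (k + g - 1)) n x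
           - (\<Sum>l = 1..g - 2. CSF (cycle_graph (g - l)) n x * CSF (tailed H v (k + l - 1)) n x)"
proof -
  note H = assms(1) and v = assms(2) and g = assms(3)
  define R where "R c = RS H v n x c" for c
  define Y where "Y c = RS (cycle_graph g) 0 n x c" for c
  define A where "A = real (g - 1)"
  define T where "T j = Tr n x (g - 1 - j)" for j
  have finC: "finite (verts (cycle_graph g))" by (simp add: cyc_verts)
  have zC: "0 \<in> verts (cycle_graph g)" using g by (simp add: cyc_verts)
  have LHS: "CSF (Pk k (cycle_graph g) 0 H v) n x = (\<Sum>d<n. (\<Sum>c<n. x c * Y c * Wk n x k c d) * R d)"
    unfolding Y_def R_def
    by (rule Pk_decomp[OF finC simple_wf(1)[OF H] zC v cyc_wf simple_wf(2)[OF H]])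
  have Yc: "Y c = A * Pw n x (g - 1) c - (\<Sum>j<g - 2. T j * Pw n x j c)" if c: "c < n" for c
  proof -
    have gg: "g - 1 = Suc (g - 2)" using g by simp
    have z: "Wk n x (g - 1) c c + real (g - 2) * Pw n x (g - 1) c = (\<Sum>j<g - 2. T j * Pw n x j c)"
      unfolding T_def using Zid[OF c, of x "g - 2"] gg by (simp add: Suc_diff_le)
    have "A = real (g - 2) + 1" using g by (simp add: A_def)
    then show ?thesis using z RS_cycle[OF g c, of x] unfolding Y_def by (simp add: algebra_simps)
  qed
  have inner: "(\<Sum>c<n. x c * Y c * Wk n x k c d) =
       x d * (A * Pw n x (k + (g - 1)) d - (\<Sum>j<g - 2. T j * Pw n x (k + j) d))" for d
  proof -
    have "(\<Sum>c<n. x c * Y c * Wk n x k c d) = (\<Sum>c<n. x d * (Wk n x k d c * Y c))"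
    proof (rule sum.cong[OF refl])
      fix c
      have "x c * Wk n x k c d = x d * Wk n x k d c" by (rule Wk_sym)
      then show "x c * Y c * Wk n x k c d = x d * (Wk n x k d c * Y c)"
        by (metis mult.assoc mult.commute)
    qed
    also have "\<dots> = x d * (\<Sum>c<n. Wk n x k d c * Y c)" by (simp add: sum_distrib_left)
    also have "(\<Sum>c<n. Wk n x k d c * Y c) =
        (\<Sum>c<n. A * (Wk n x k d c * Pw n x (g - 1) c) - (\<Sum>j<g - 2. T j * (Wk n x k d c * Pw n x j c)))"
      by (rule sum.cong[OF refl]) (simp add: Yc sum_distrib_left algebra_simps)
    also have "\<dots> = A * Pw n x (k + (g - 1)) d - (\<Sum>j<g - 2. T j * Pw n x (k + j) d)"
      by (simp add: sum_subtractf Pw_assoc sum_distrib_left) (rule sum.swap)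
    finally show ?thesis .
  qed
  have "CSF (Pk k (cycle_graph g) 0 H v) n x =
        (\<Sum>d<n. x d * R d * (A * Pw n x (k + (g - 1)) d - (\<Sum>j<g - 2. T j * Pw n x (k + j) d)))"
    unfolding LHS inner by (rule sum.cong[OF refl]) (simp add: algebra_simps)
  also have "\<dots> = A * (\<Sum>d<n. x d * R d * Pw n x (k + (g - 1)) d) -
        (\<Sum>j<g - 2. T j * (\<Sum>d<n. x d * R d * Pw n x (k + j) d))"
    by (simp add: right_diff_distrib sum_subtractf sum_distrib_left algebra_simps) (rule sum.swap)
  also have "\<dots> = of_nat (g - 1) * CSF (tailed H v (k + g - 1)) n x
           - (\<Sum>l = 1..g - 2. CSF (cycle_graph (g - l)) n x * CSF (tailed H v (k + l - 1)) n x)"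
  proof -
    have t1: "CSF (tailed H v (k + g - 1)) n x = (\<Sum>d<n. x d * R d * Pw n x (k + (g - 1)) d)"
      unfolding CSF_tailed[OF H v] R_def using g by simp
    have t2: "(\<Sum>l = 1..g - 2. CSF (cycle_graph (g - l)) n x * CSF (tailed H v (k + l - 1)) n x) =
              (\<Sum>j<g - 2. CSF (cycle_graph (g - Suc j)) n x * CSF (tailed H v (k + Suc j - 1)) n x)"
      by (simp add: sum.atLeast1_atMost_eq)
    also have "\<dots> = (\<Sum>j<g - 2. T j * (\<Sum>d<n. x d * R d * Pw n x (k + j) d))"
    proof (rule sum.cong[OF refl])
      fix j assume "j \<in> {..<g - 2}"
      then have j: "j < g - 2" by simp
      then have "g - Suc j \<ge> 2" by simp
      then have "CSF (cycle_graph (g - Suc j)) n x = T j" unfolding T_def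
        by (simp add: CSF_cycle)
      moreover have "CSF (tailed H v (k + Suc j - 1)) n x = (\<Sum>d<n. x d * R d * Pw n x (k + j) d)"
        unfolding CSF_tailed[OF H v] R_def by simp
      ultimately show "CSF (cycle_graph (g - Suc j)) n x * CSF (tailed H v (k + Suc j - 1)) n x =
                       T j * (\<Sum>d<n. x d * R d * Pw n x (k + j) d)" by simp
    qed
    finally show ?thesis unfolding t1 A_def by simp
  qed
  finally show ?thesis .
qed

end
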